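(* Let $G$ be a finite simple robust graph and let $v \in V(G)$ with $d(v) \leq 6$. If $\Delta(\overline{G[N(v)]}) > 1$, then $\{v\}$ is reducible in $G$. Also, if $\overline{G[N(v)]}$ has exactly $2$ edges, then $\{v\}$ is reducible in $G$.
   Context: $\overline{H}$ is the complement of $H$. $G$ is robust if for every $u\in V(G)$, every component of $G[N(u)]$ has at least $5$ vertices. For a set $\mathcal{S}$ of triangles, an $\mathcal{S}$-edge is an edge of a triangle in $\mathcal{S}$. A nonempty set $V_0 \subseteq V(G)$ is reducible if there exist a set $\mathcal{S}$ of pairwise edge-disjoint triangles of $G$ and a set $X \subseteq E(G)$ such that (i) $|X| \leq 2|\mathcal{S}|$; (ii) $G - X$ has no triangle containing a vertex of $V_0$; (iii) $X$ contains every $\mathcal{S}$-edge whose endpoints both lie outside $V_0$. *)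

theory Defs
  imports Main
begin

definition simple_graph :: "'a set \<Rightarrow> 'a set set \<Rightarrow> bool" where
  "simple_graph V E \<longleftrightarrow> finite V \<and>
     (\<forall>e\<in>E. \<exists>a b. e = {a, b} \<and> a \<noteq> b \<and> a \<in> V \<and> b \<in> V)"

definition nbhd :: "'a set set \<Rightarrow> 'a \<Rightarrow> 'a set" where
  "nbhd E u = {w. {u, w} \<in> E}"

definition degree :: "'a set set \<Rightarrow> 'a \<Rightarrow> nat" where
  "degree E u = card (nbhd E u)"

definition adj_in :: "'a set set \<Rightarrow> 'a set \<Rightarrow> 'a \<Rightarrow> 'a \<Rightarrow> bool" where
  "adj_in E W a b \<longleftrightarrow> a \<in> W \<and> b \<in> W \<and> {a, b} \<in> E"

definition component_in :: "'a set set \<Rightarrow> 'a set \<Rightarrow> 'a \<Rightarrow> 'a set" where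
  "component_in E W x = {y. (adj_in E W)\<^sup>*\<^sup>* x y}"

definition robust :: "'a set \<Rightarrow> 'a set set \<Rightarrow> bool" where
  "robust V E \<longleftrightarrow> (\<forall>u\<in>V. \<forall>x\<in>nbhd E u. card (component_in E (nbhd E u) x) \<ge> 5)"

definition compl_edges :: "'a set set \<Rightarrow> 'a set \<Rightarrow> 'a set set" where
  "compl_edges E W = {{x, y} | x y. x \<in> W \<and> y \<in> W \<and> x \<noteq> y \<and> {x, y} \<notin> E}"

definition max_degree :: "'a set \<Rightarrow> 'a set set \<Rightarrow> nat" where
  "max_degree W F = (if W = {} then 0 else Max ((\<lambda>x. card (nbhd F x \<inter> W)) ` W))"

definition triangle :: "'a set set \<Rightarrow> 'a set \<Rightarrow> bool" where
  "triangle E T \<longleftrightarrow> (\<exists>a b c. T = {a, b, c} \<and> a \<noteq> b \<and> b \<noteq> c \<and> a \<noteq> c \<and>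
      {a, b} \<in> E \<and> {b, c} \<in> E \<and> {a, c} \<in> E)"

definition tri_edges :: "'a set \<Rightarrow> 'a set set" where
  "tri_edges T = {e. e \<subseteq> T \<and> card e = 2}"

definition edge_disjoint :: "'a set set \<Rightarrow> bool" where
  "edge_disjoint S \<longleftrightarrow> (\<forall>T\<in>S. \<forall>T'\<in>S. T \<noteq> T' \<longrightarrow> tri_edges T \<inter> tri_edges T' = {})"

definition reducible :: "'a set \<Rightarrow> 'a set set \<Rightarrow> 'a set \<Rightarrow> bool" where
  "reducible V E V0 \<longleftrightarrow> V0 \<noteq> {} \<and> V0 \<subseteq> V \<and>
     (\<exists>S X. (\<forall>T\<in>S. triangle E T) \<and> edge_disjoint S \<and> X \<subseteq> E \<and>
        card X \<le> 2 * card S \<and>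
        (\<forall>T. triangle (E - X) T \<longrightarrow> T \<inter> V0 = {}) \<and>
        (\<forall>T\<in>S. \<forall>e\<in>tri_edges T. e \<inter> V0 = {} \<longrightarrow> e \<in> X))"

end

theory Submission
  imports Defs
begin


lemma tri_edges3:
  assumes "a \<noteq> b" "b \<noteq> c" "a \<noteq> c"
  shows "tri_edges {a,b,c} = {{a,b},{a,c},{b,c}}"
proof
  show "tri_edges {a, b, c} \<subseteq> {{a, b}, {a, c}, {b, c}}"
  proof
    fix e assume "e \<in> tri_edges {a,b,c}"
    then have e: "e \<subseteq> {a,b,c}" "card e = 2" by (auto simp: tri_edges_def)
    then obtain x y where xy: "e = {x,y}" "x \<noteq> y" by (auto simp: card_2_iff)
    with e show "e \<in> {{a, b}, {a, c}, {b, c}}" by (auto simp: insert_commute)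
  qed
next
  show "{{a, b}, {a, c}, {b, c}} \<subseteq> tri_edges {a, b, c}"
    using assms by (auto simp: tri_edges_def)
qed

lemma triangle_edges:
  assumes "triangle E t" shows "tri_edges t \<subseteq> E" "card (tri_edges t) \<le> 3"
proof -
  obtain a b c where t: "t = {a,b,c}" "a \<noteq> b" "b \<noteq> c" "a \<noteq> c" "{a,b} \<in> E" "{b,c} \<in> E" "{a,c} \<in> E"
    using assms unfolding triangle_def by blast
  show "tri_edges t \<subseteq> E" using t by (simp add: tri_edges3)
  show "card (tri_edges t) \<le> 3" using t by (simp add: tri_edges3 card_insert_le_m1)
qed

lemma sg_edge: "simple_graph V E \<Longrightarrow> e \<in> E \<Longrightarrow> \<exists>a b. e = {a,b} \<and> a \<noteq> b \<and> a \<in> V \<and> b \<in> V"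
  unfolding simple_graph_def by blast

lemma sg_loop: "simple_graph V E \<Longrightarrow> {a} \<notin> E"
  using sg_edge by (metis doubleton_eq_iff insert_absorb2)

lemma nbhd_V: "simple_graph V E \<Longrightarrow> nbhd E v \<subseteq> V"
  unfolding nbhd_def using sg_edge by (smt (verit) doubleton_eq_iff insert_commute mem_Collect_eq subsetI)

lemma v_notin_nbhd: "simple_graph V E \<Longrightarrow> v \<notin> nbhd E v"
  unfolding nbhd_def using sg_loop by fastforce


lemma cert_abs:
  assumes sg: "simple_graph V E" and vV: "v \<in> V"
  and M_e: "\<forall>e\<in>M. \<exists>a b. e = {a,b} \<and> a \<noteq> b \<and> a \<in> nbhd E v \<and> b \<in> nbhd E v \<and> e \<in> E"
  and M_d: "\<forall>e\<in>M. \<forall>e'\<in>M. e \<noteq> e' \<longrightarrow> e \<inter> e' = {}"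
  and T_t: "\<forall>t\<in>T. triangle E t \<and> t \<subseteq> nbhd E v"
  and T_d: "\<forall>t\<in>T. \<forall>t'\<in>T. t \<noteq> t' \<longrightarrow> tri_edges t \<inter> tri_edges t' = {}"
  and MT: "\<forall>e\<in>M. \<forall>t\<in>T. e \<notin> tri_edges t"
  and C_s: "C \<subseteq> nbhd E v"
  and finM: "finite M" and finT: "finite T" and finC: "finite C"
  and cardc: "card T + card C \<le> card M"
  and cov: "\<forall>a b. a \<in> nbhd E v \<longrightarrow> b \<in> nbhd E v \<longrightarrow> {a,b} \<in> E \<longrightarrow>
              {a,b} \<in> M \<or> (\<exists>t\<in>T. {a,b} \<subseteq> t) \<or> a \<in> C \<or> b \<in> C"
  shows "reducible V E {v}"
proof -
  define N where "N = nbhd E v"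
  have vN: "v \<notin> N" using v_notin_nbhd[OF sg] N_def by simp
  have Nn: "w \<in> N \<longleftrightarrow> {v,w} \<in> E" for w unfolding N_def nbhd_def by simp
  define S where "S = (insert v) ` M \<union> T"
  define X where "X = M \<union> (\<Union>t\<in>T. tri_edges t) \<union> (\<lambda>c. {v,c}) ` C"
  have Mform: "\<exists>a b. e = {a,b} \<and> a \<noteq> b \<and> a \<in> N \<and> b \<in> N \<and> e \<in> E" if "e \<in> M" for e
    using M_e that N_def by blast
  have TN: "t \<subseteq> N" "triangle E t" if "t \<in> T" for t using T_t that N_def by auto
  have vT: "v \<notin> t" if "t \<in> T" for t using TN(1)[OF that] vN by blast
  have triS: "\<forall>t\<in>S. triangle E t"
  proof
    fix t assume "t \<in> S"
    then show "triangle E t"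
    proof (cases "t \<in> T")
      case True then show ?thesis using TN by blast
    next
      case False
      with \<open>t \<in> S\<close> obtain e where e: "e \<in> M" "t = insert v e" unfolding S_def by blast
      from Mform[OF e(1)] obtain a b where ab: "e = {a,b}" "a \<noteq> b" "a \<in> N" "b \<in> N" "e \<in> E" by blast
      have h1: "v \<noteq> a" "v \<noteq> b" using ab vN by auto
      have h2: "{v,a} \<in> E" "{v,b} \<in> E" using ab Nn by auto
      have h3: "{a,b} \<in> E" using ab by simp
      have teq: "t = {v,a,b}" using e(2) ab(1) by simp
      show ?thesis unfolding triangle_def teq using h1 h2 h3 ab(2) by blast
    qed
  qed
  have edS: "edge_disjoint S"
    unfolding edge_disjoint_def
  proof (intro ballI impI)
    fix t t' assume tS: "t \<in> S" and t'S: "t' \<in> S" and ne: "t \<noteq> t'"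
    have Mtri: "tri_edges (insert v e) = {{v,a},{v,b},{a,b}}" if "e = {a,b}" "a \<noteq> b" "a \<in> N" "b \<in> N" for e a b
      using that vN tri_edges3[of v a b] by (auto simp: insert_commute)
    have TnoV: "\<forall>x\<in>tri_edges t0. v \<notin> x" if "t0 \<in> T" for t0
      using vT[OF that] unfolding tri_edges_def by blast
    have Tsub: "\<forall>x\<in>tri_edges t0. x \<subseteq> N" if "t0 \<in> T" for t0
      using TN(1)[OF that] unfolding tri_edges_def by blast
    show "tri_edges t \<inter> tri_edges t' = {}"
    proof (cases "t \<in> T")
      case tT: True
      show ?thesis
      proof (cases "t' \<in> T")
        case True then show ?thesis using T_d tT ne by blast
      next
        case False
        with t'S obtain e where e: "e \<in> M" "t' = insert v e" unfolding S_def by blast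
        from Mform[OF e(1)] obtain a b where ab: "e = {a,b}" "a \<noteq> b" "a \<in> N" "b \<in> N" by blast
        have "e \<notin> tri_edges t" using MT e(1) tT by blast
        then have n1: "{a,b} \<notin> tri_edges t" using ab(1) by simp
        have te: "tri_edges t' = {{v,a},{v,b},{a,b}}" using Mtri[OF ab] e(2) by simp
        show ?thesis unfolding te using n1 TnoV[OF tT] by blast
      qed
    next
      case tnT: False
      with tS obtain e where e: "e \<in> M" "t = insert v e" unfolding S_def by blast
      from Mform[OF e(1)] obtain a b where ab: "e = {a,b}" "a \<noteq> b" "a \<in> N" "b \<in> N" by blast
      show ?thesis
      proof (cases "t' \<in> T")
        case tT: True
        have "e \<notin> tri_edges t'" using MT e(1) tT by blast
        then have n1: "{a,b} \<notin> tri_edges t'" using ab(1) by simp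
        have te: "tri_edges t = {{v,a},{v,b},{a,b}}" using Mtri[OF ab] e(2) by simp
        show ?thesis unfolding te using n1 TnoV[OF tT] by blast
      next
        case False
        with t'S obtain e' where e': "e' \<in> M" "t' = insert v e'" unfolding S_def by blast
        from Mform[OF e'(1)] obtain c d where cd: "e' = {c,d}" "c \<noteq> d" "c \<in> N" "d \<in> N" by blast
        have "e \<noteq> e'" using ne e e' by blast
        then have dj: "e \<inter> e' = {}" using M_d e e' by blast
        have te: "tri_edges t = {{v,a},{v,b},{a,b}}" using Mtri[OF ab] e(2) by simp
        have te': "tri_edges t' = {{v,c},{v,d},{c,d}}" using Mtri[OF cd] e'(2) by simp
        have "a \<noteq> c" "a \<noteq> d" "b \<noteq> c" "b \<noteq> d" using dj ab cd by auto
        moreover have "v \<noteq> a" "v \<noteq> b" "v \<noteq> c" "v \<noteq> d" using vN ab cd by auto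
        ultimately show ?thesis unfolding te te' by (auto simp: doubleton_eq_iff)
      qed
    qed
  qed
  have XE: "X \<subseteq> E"
  proof -
    have "M \<subseteq> E" using Mform by blast
    moreover have "(\<Union>t\<in>T. tri_edges t) \<subseteq> E" using TN triangle_edges(1) by blast
    moreover have "(\<lambda>c. {v,c}) ` C \<subseteq> E" using C_s N_def Nn by auto
    ultimately show ?thesis unfolding X_def by blast
  qed
  have cardS: "card S = card M + card T"
  proof -
    have inj: "inj_on (insert v) M"
    proof (rule inj_onI)
      fix e e' assume "e \<in> M" "e' \<in> M" "insert v e = insert v e'"
      moreover have "v \<notin> e" "v \<notin> e'" using Mform \<open>e \<in> M\<close> \<open>e' \<in> M\<close> vN by blast+
      ultimately show "e = e'" by (metis insert_ident)
    qed
    have dj: "(insert v) ` M \<inter> T = {}" using vT by blast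
    have "card S = card ((insert v) ` M) + card T"
      unfolding S_def using dj finM finT by (simp add: card_Un_disjoint)
    also have "card ((insert v) ` M) = card M" using inj by (simp add: card_image)
    finally show ?thesis .
  qed
  have cardX: "card X \<le> 2 * card S"
  proof -
    have f1: "finite (\<Union>t\<in>T. tri_edges t)"
    proof -
      have "(\<Union>t\<in>T. tri_edges t) \<subseteq> Pow (\<Union>T)" unfolding tri_edges_def by blast
      moreover have "finite (\<Union>T)" using TN finT nbhd_V[OF sg] sg unfolding simple_graph_def N_def
        by (meson finite_Union finite_subset)
      ultimately show ?thesis by (meson finite_Pow_iff finite_subset)
    qed
    have "card X \<le> card M + card (\<Union>t\<in>T. tri_edges t) + card ((\<lambda>c. {v,c}) ` C)"
      unfolding X_def using finM f1 finC
      by (metis (no_types, lifting) card_Un_le add_le_mono le_trans order_refl)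
    also have "card (\<Union>t\<in>T. tri_edges t) \<le> (\<Sum>t\<in>T. card (tri_edges t))"
      by (rule card_UN_le[OF finT])
    also have "(\<Sum>t\<in>T. card (tri_edges t)) \<le> (\<Sum>t\<in>T. 3)"
      by (rule sum_mono) (use TN triangle_edges(2) in blast)
    also have "card ((\<lambda>c. {v,c}) ` C) \<le> card C" by (rule card_image_le[OF finC])
    finally show ?thesis using cardS cardc by simp
  qed
  have key: "{p,q} \<in> X \<or> {v,p} \<in> X \<or> {v,q} \<in> X" if "p \<in> N" "q \<in> N" "{p,q} \<in> E" "p \<noteq> q" for p q
  proof -
    from cov that N_def have "{p,q} \<in> M \<or> (\<exists>t\<in>T. {p,q} \<subseteq> t) \<or> p \<in> C \<or> q \<in> C" by blast
    then show ?thesis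
    proof (elim disjE)
      assume "\<exists>t\<in>T. {p,q} \<subseteq> t"
      then obtain t where "t \<in> T" "{p,q} \<subseteq> t" by blast
      moreover have "card {p,q} = 2" using that by simp
      ultimately have "{p,q} \<in> (\<Union>t\<in>T. tri_edges t)" unfolding tri_edges_def by blast
      then show ?thesis unfolding X_def by blast
    qed (auto simp: X_def)
  qed
  have tf: "\<forall>t. triangle (E - X) t \<longrightarrow> t \<inter> {v} = {}"
  proof (intro allI impI)
    fix t assume "triangle (E - X) t"
    then obtain a b c where t: "t = {a,b,c}" "a \<noteq> b" "b \<noteq> c" "a \<noteq> c"
      "{a,b} \<in> E - X" "{b,c} \<in> E - X" "{a,c} \<in> E - X"
      unfolding triangle_def by blast
    show "t \<inter> {v} = {}"
    proof (rule ccontr)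
      assume "t \<inter> {v} \<noteq> {}"
      then have "v = a \<or> v = b \<or> v = c" using t by blast
      then show False
      proof (elim disjE)
        assume "v = a"
        then have "b \<in> N" "c \<in> N" using t Nn by auto
        then show False using key[of b c] t \<open>v = a\<close> by auto
      next
        assume "v = b"
        then have "a \<in> N" "c \<in> N" using t Nn by (auto simp: insert_commute)
        then show False using key[of a c] t \<open>v = b\<close> by (auto simp: insert_commute)
      next
        assume "v = c"
        then have "a \<in> N" "b \<in> N" using t Nn by (auto simp: insert_commute)
        then show False using key[of a b] t \<open>v = c\<close> by (auto simp: insert_commute)
      qed
    qed
  qed
  have iii: "\<forall>t\<in>S. \<forall>e\<in>tri_edges t. e \<inter> {v} = {} \<longrightarrow> e \<in> X"
  proof (intro ballI impI)
    fix t e assume tS: "t \<in> S" and et: "e \<in> tri_edges t" and ev: "e \<inter> {v} = {}"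
    show "e \<in> X"
    proof (cases "t \<in> T")
      case True then show ?thesis using et unfolding X_def by blast
    next
      case False
      with tS obtain e0 where e0: "e0 \<in> M" "t = insert v e0" unfolding S_def by blast
      from Mform[OF e0(1)] obtain a b where ab: "e0 = {a,b}" "a \<noteq> b" by blast
      have "e \<subseteq> {a,b}" "card e = 2" using et ev e0 ab unfolding tri_edges_def by auto
      then have "e = {a,b}" using ab by (metis card_2_iff card_subset_eq finite.emptyI finite.insertI)
      then show ?thesis using e0 ab unfolding X_def by blast
    qed
  qed
  show ?thesis unfolding reducible_def
    using vV triS edS XE cardX tf iii by blast
qed


definition cert :: "nat \<Rightarrow> (nat \<Rightarrow> nat \<Rightarrow> bool) \<Rightarrow> (nat\<times>nat) set \<Rightarrow> (nat\<times>nat\<times>nat) set \<Rightarrow> nat set \<Rightarrow> bool" where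
"cert n P Mn Tn Cn \<longleftrightarrow>
  (\<forall>(i,j)\<in>Mn. i<j \<and> j<n \<and> P i j) \<and>
  (\<forall>(i,j)\<in>Mn. \<forall>(k,l)\<in>Mn. (i,j)\<noteq>(k,l) \<longrightarrow> i\<noteq>k \<and> i\<noteq>l \<and> j\<noteq>k \<and> j\<noteq>l) \<and>
  (\<forall>(i,j,k)\<in>Tn. i<j \<and> j<k \<and> k<n \<and> P i j \<and> P j k \<and> P i k) \<and>
  (\<forall>(i,j,k)\<in>Tn. \<forall>(i',j',k')\<in>Tn. (i,j,k)\<noteq>(i',j',k') \<longrightarrow> card ({i,j,k} \<inter> {i',j',k'}) \<le> 1) \<and>
  (\<forall>(i,j)\<in>Mn. \<forall>(a,b,c)\<in>Tn. \<not> {i,j} \<subseteq> {a,b,c}) \<and>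
  Cn \<subseteq> {..<n} \<and> card Tn + card Cn \<le> card Mn \<and> finite Mn \<and> finite Tn \<and>
  (\<forall>i<n. \<forall>j<n. i<j \<longrightarrow> P i j \<longrightarrow> (i,j)\<in>Mn \<or> (\<exists>(a,b,c)\<in>Tn. {i,j} \<subseteq> {a,b,c}) \<or> i\<in>Cn \<or> j\<in>Cn)"

lemma cert_transfer:
  assumes sg: "simple_graph V E" and vV: "v \<in> V" and dL: "distinct L" and sL: "set L = nbhd E v"
  and c: "cert (length L) (\<lambda>i j. {L!i, L!j} \<in> E) Mn Tn Cn"
  shows "reducible V E {v}"
proof -
  define n where "n = length L"
  note cc = c[unfolded cert_def, folded n_def]
  have c1: "\<forall>(i,j)\<in>Mn. i<j \<and> j<n \<and> {L!i, L!j} \<in> E" using cc by (elim conjE) assumption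
  have c2: "\<forall>(i,j)\<in>Mn. \<forall>(k,l)\<in>Mn. (i,j)\<noteq>(k,l) \<longrightarrow> i\<noteq>k \<and> i\<noteq>l \<and> j\<noteq>k \<and> j\<noteq>l" using cc by (elim conjE) assumption
  have c3: "\<forall>(i,j,k)\<in>Tn. i<j \<and> j<k \<and> k<n \<and> {L!i, L!j} \<in> E \<and> {L!j, L!k} \<in> E \<and> {L!i, L!k} \<in> E" using cc by (elim conjE) assumption
  have c4: "\<forall>(i,j,k)\<in>Tn. \<forall>(i',j',k')\<in>Tn. (i,j,k)\<noteq>(i',j',k') \<longrightarrow> card ({i,j,k} \<inter> {i',j',k'}) \<le> 1" using cc by (elim conjE) assumption
  have c5: "\<forall>(i,j)\<in>Mn. \<forall>(a,b,c)\<in>Tn. \<not> {i,j} \<subseteq> {a,b,c}" using cc by (elim conjE) assumption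
  have c6: "Cn \<subseteq> {..<n}" using cc by (elim conjE) assumption
  have c7: "card Tn + card Cn \<le> card Mn" using cc by (elim conjE) assumption
  have c8a: "finite Mn" using cc by (elim conjE) assumption
  have c8b: "finite Tn" using cc by (elim conjE) assumption
  note c8 = c8a c8b
  have c9: "\<forall>i<n. \<forall>j<n. i<j \<longrightarrow> {L!i, L!j} \<in> E \<longrightarrow> (i,j)\<in>Mn \<or> (\<exists>(a,b,c)\<in>Tn. {i,j} \<subseteq> {a,b,c}) \<or> i\<in>Cn \<or> j\<in>Cn"
    using cc by (elim conjE) assumption
  have inj: "L!i = L!j \<longleftrightarrow> i=j" if "i<n" "j<n" for i j using dL that nth_eq_iff_index_eq n_def by blast
  have injo: "inj_on (\<lambda>i. L!i) {..<n}" using inj by (auto intro: inj_onI)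
  have inN: "L!i \<in> nbhd E v" if "i<n" for i using that sL n_def by (metis nth_mem)
  define f2 where "f2 = (\<lambda>(i::nat,j::nat). {L!i, L!j})"
  define f3 where "f3 = (\<lambda>(i::nat,j::nat,k::nat). {L!i, L!j, L!k})"
  define M where "M = f2 ` Mn"
  define T where "T = f3 ` Tn"
  define C where "C = (\<lambda>i. L!i) ` Cn"
  have img: "A \<subseteq> B" if g1: "(\<lambda>i. L!i) ` A \<subseteq> (\<lambda>i. L!i) ` B" and g2: "A \<subseteq> {..<n}" and g3: "B \<subseteq> {..<n}" for A B
  proof
    fix x assume "x \<in> A"
    then obtain y where "y \<in> B" "L!x = L!y" using g1 by blast
    moreover have "x<n" "y<n" using g2 g3 \<open>x \<in> A\<close> \<open>y \<in> B\<close> by auto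
    ultimately show "x \<in> B" using inj by auto
  qed
  show ?thesis
  proof (rule cert_abs[OF sg vV, of M T C])
    show "\<forall>e\<in>M. \<exists>a b. e = {a,b} \<and> a \<noteq> b \<and> a \<in> nbhd E v \<and> b \<in> nbhd E v \<and> e \<in> E"
    proof
      fix e assume "e \<in> M"
      then obtain x where x: "x \<in> Mn" "e = f2 x" unfolding M_def by blast
      obtain i j where "x = (i,j)" by (cases x)
      then have ij: "(i,j) \<in> Mn" "e = {L!i, L!j}" using x unfolding f2_def by auto
      then have "i<j" "j<n" "{L!i, L!j} \<in> E" using c1 by auto
      then show "\<exists>a b. e = {a,b} \<and> a \<noteq> b \<and> a \<in> nbhd E v \<and> b \<in> nbhd E v \<and> e \<in> E"
        using ij inj[of i j] inN[of i] inN[of j] by (intro exI[of _ "L!i"] exI[of _ "L!j"]) auto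
    qed
    show "\<forall>e\<in>M. \<forall>e'\<in>M. e \<noteq> e' \<longrightarrow> e \<inter> e' = {}"
    proof (intro ballI impI)
      fix e e' assume "e \<in> M" "e' \<in> M" "e \<noteq> e'"
      then obtain x y where x: "x \<in> Mn" "e = f2 x" and y: "y \<in> Mn" "e' = f2 y" unfolding M_def by blast
      obtain i j where "x = (i,j)" by (cases x)
      then have ij: "(i,j) \<in> Mn" "e = {L!i, L!j}" using x unfolding f2_def by auto
      obtain k l where "y = (k,l)" by (cases y)
      then have kl: "(k,l) \<in> Mn" "e' = {L!k, L!l}" using y unfolding f2_def by auto
      have nekl: "(i,j) \<noteq> (k,l)" using \<open>e \<noteq> e'\<close> ij(2) kl(2) by auto
      have h2: "\<forall>(x,y)\<in>Mn. (i,j) \<noteq> (x,y) \<longrightarrow> i\<noteq>x \<and> i\<noteq>y \<and> j\<noteq>x \<and> j\<noteq>y" using bspec[OF c2 ij(1)] by simp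
      from bspec[OF h2 kl(1)] have d: "i\<noteq>k \<and> i\<noteq>l \<and> j\<noteq>k \<and> j\<noteq>l" using nekl by simp
      have "i<n" "j<n" "k<n" "l<n" using c1 ij kl by auto
      then show "e \<inter> e' = {}" using d ij kl inj by auto
    qed
    show "\<forall>t\<in>T. triangle E t \<and> t \<subseteq> nbhd E v"
    proof
      fix t assume "t \<in> T"
      then obtain x where x: "x \<in> Tn" "t = f3 x" unfolding T_def by blast
      obtain i j k where "x = (i,j,k)" by (cases x)
      then have ijk: "(i,j,k) \<in> Tn" "t = {L!i, L!j, L!k}" using x unfolding f3_def by auto
      then have h: "i<j" "j<k" "k<n" "{L!i, L!j} \<in> E" "{L!j, L!k} \<in> E" "{L!i, L!k} \<in> E" using c3 by auto
      have "L!i \<noteq> L!j" "L!j \<noteq> L!k" "L!i \<noteq> L!k" using h inj by auto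
      then have "triangle E t" unfolding triangle_def using ijk h by blast
      moreover have "t \<subseteq> nbhd E v" using ijk h inN by auto
      ultimately show "triangle E t \<and> t \<subseteq> nbhd E v" by blast
    qed
    show "\<forall>t\<in>T. \<forall>t'\<in>T. t \<noteq> t' \<longrightarrow> tri_edges t \<inter> tri_edges t' = {}"
    proof (intro ballI impI)
      fix t t' assume "t \<in> T" "t' \<in> T" "t \<noteq> t'"
      then obtain x y where x: "x \<in> Tn" "t = f3 x" and y: "y \<in> Tn" "t' = f3 y" unfolding T_def by blast
      obtain i j k where "x = (i,j,k)" by (cases x)
      then have ijk: "(i,j,k) \<in> Tn" "t = {L!i, L!j, L!k}" using x unfolding f3_def by auto
      obtain i' j' k' where "y = (i',j',k')" by (cases y)
      then have ijk': "(i',j',k') \<in> Tn" "t' = {L!i', L!j', L!k'}" using y unfolding f3_def by auto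
      have ne: "(i,j,k) \<noteq> (i',j',k')" using \<open>t \<noteq> t'\<close> ijk(2) ijk'(2) by auto
      have "\<forall>(a,b,c)\<in>Tn. (i,j,k) \<noteq> (a,b,c) \<longrightarrow> card ({i,j,k} \<inter> {a,b,c}) \<le> 1"
        using bspec[OF c4 ijk(1)] by simp
      from bspec[OF this ijk'(1)] have c1: "card ({i,j,k} \<inter> {i',j',k'}) \<le> 1" using ne by simp
      have lt: "{i,j,k} \<subseteq> {..<n}" "{i',j',k'} \<subseteq> {..<n}" using c3 ijk(1) ijk'(1) by auto
      have teq: "t \<inter> t' = (\<lambda>i. L!i) ` ({i,j,k} \<inter> {i',j',k'})"
        using inj_on_image_Int[OF injo lt] ijk(2) ijk'(2) by simp
      have ct: "card (t \<inter> t') \<le> 1" unfolding teq using c1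
        by (meson card_image_le finite.emptyI finite.insertI finite_Int le_trans)
      show "tri_edges t \<inter> tri_edges t' = {}"
      proof (rule ccontr)
        assume "tri_edges t \<inter> tri_edges t' \<noteq> {}"
        then obtain e where "e \<subseteq> t \<inter> t'" "card e = 2" unfolding tri_edges_def by blast
        moreover have "finite (t \<inter> t')" using ijk(2) by simp
        ultimately have "2 \<le> card (t \<inter> t')" by (metis card_mono)
        then show False using ct by simp
      qed
    qed
    show "\<forall>e\<in>M. \<forall>t\<in>T. e \<notin> tri_edges t"
    proof (intro ballI)
      fix e t assume "e \<in> M" "t \<in> T"
      then obtain x y where x: "x \<in> Mn" "e = f2 x" and y: "y \<in> Tn" "t = f3 y" unfolding M_def T_def by blast
      obtain i j where "x = (i,j)" by (cases x)
      then have ij: "(i,j) \<in> Mn" "e = {L!i, L!j}" using x unfolding f2_def by auto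
      obtain a b c where "y = (a,b,c)" by (cases y)
      then have abc: "(a,b,c) \<in> Tn" "t = {L!a, L!b, L!c}" using y unfolding f3_def by auto
      have lt: "{i,j} \<subseteq> {..<n}" "{a,b,c} \<subseteq> {..<n}" using c1 c3 ij(1) abc(1) by auto
      show "e \<notin> tri_edges t"
      proof
        assume "e \<in> tri_edges t"
        then have "(\<lambda>i. L!i) ` {i,j} \<subseteq> (\<lambda>i. L!i) ` {a,b,c}" unfolding tri_edges_def using ij abc by auto
        then have "{i,j} \<subseteq> {a,b,c}" using img lt by blast
        moreover have h5: "\<forall>(x,y,z)\<in>Tn. \<not> {i,j} \<subseteq> {x,y,z}" using bspec[OF c5 ij(1)] by simp
        from bspec[OF h5 abc(1)] have "\<not> {i,j} \<subseteq> {a,b,c}" by simp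
        ultimately show False by blast
      qed
    qed
    show "C \<subseteq> nbhd E v" unfolding C_def using c6 inN by auto
    show "finite M" "finite T" unfolding M_def T_def using c8 by auto
    show "finite C" unfolding C_def using c6 by (meson finite_imageI finite_lessThan finite_subset)
    show "card T + card C \<le> card M"
    proof -
      have "card T \<le> card Tn" unfolding T_def by (rule card_image_le[OF c8(2)])
      moreover have "card C = card Cn" unfolding C_def
        using inj_on_subset[OF injo c6] by (simp add: card_image)
      moreover have "card M = card Mn" unfolding M_def
      proof (rule card_image, rule inj_onI)
        fix x y assume xy: "x \<in> Mn" "y \<in> Mn" "f2 x = f2 y"
        obtain i j where x: "x = (i,j)" by (cases x)
        obtain k l where y: "y = (k,l)" by (cases y)
        have o1: "i<j" "j<n" using c1 xy(1) x by auto
        have o2: "k<l" "l<n" using c1 xy(2) y by auto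
        have "{L!i,L!j} = {L!k,L!l}" using xy(3) x y unfolding f2_def by simp
        then have "(L!i = L!k \<and> L!j = L!l) \<or> (L!i = L!l \<and> L!j = L!k)" by (simp add: doubleton_eq_iff)
        then have "(i = k \<and> j = l) \<or> (i = l \<and> j = k)" using inj o1 o2 by auto
        then show "x = y" using x y o1 o2 by auto
      qed
      ultimately show ?thesis using c7 by simp
    qed
    show "\<forall>a b. a \<in> nbhd E v \<longrightarrow> b \<in> nbhd E v \<longrightarrow> {a,b} \<in> E \<longrightarrow>
              {a,b} \<in> M \<or> (\<exists>t\<in>T. {a,b} \<subseteq> t) \<or> a \<in> C \<or> b \<in> C"
    proof (intro allI impI)
      fix a b assume a: "a \<in> nbhd E v" and b: "b \<in> nbhd E v" and ab: "{a,b} \<in> E"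
      obtain i where i: "i<n" "L!i = a" using a sL n_def by (metis in_set_conv_nth)
      obtain j where j: "j<n" "L!j = b" using b sL n_def by (metis in_set_conv_nth)
      have "a \<noteq> b" using ab sg_loop[OF sg] by fastforce
      then have "i \<noteq> j" using i j by auto
      have gen: "{a,b} \<in> M \<or> (\<exists>t\<in>T. {a,b} \<subseteq> t) \<or> a \<in> C \<or> b \<in> C"
        if "p<q" "q<n" "{L!p,L!q} = {a,b}" "L!p \<in> {a,b}" "L!q \<in> {a,b}" for p q
      proof -
        have "(p,q)\<in>Mn \<or> (\<exists>(x,y,z)\<in>Tn. {p,q} \<subseteq> {x,y,z}) \<or> p\<in>Cn \<or> q\<in>Cn"
          using c9 that ab by auto
        then show ?thesis
        proof (elim disjE)
          assume "(p,q) \<in> Mn" then have "f2 (p,q) \<in> M" unfolding M_def by blast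
          then show ?thesis using that unfolding f2_def by simp
        next
          assume "\<exists>(x,y,z)\<in>Tn. {p,q} \<subseteq> {x,y,z}"
          then obtain x y z where "(x,y,z) \<in> Tn" "{p,q} \<subseteq> {x,y,z}" by blast
          then have "f3 (x,y,z) \<in> T" "{a,b} \<subseteq> f3 (x,y,z)" unfolding T_def f3_def using that(3) by auto
          then show ?thesis by blast
        next
          assume "p \<in> Cn" then have "L!p \<in> C" unfolding C_def by blast
          then show ?thesis using that by (metis \<open>a \<noteq> b\<close> doubleton_eq_iff)
        next
          assume "q \<in> Cn" then have "L!q \<in> C" unfolding C_def by blast
          then show ?thesis using that by (metis \<open>a \<noteq> b\<close> doubleton_eq_iff)
        qed
      qed
      show "{a,b} \<in> M \<or> (\<exists>t\<in>T. {a,b} \<subseteq> t) \<or> a \<in> C \<or> b \<in> C"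
      proof (cases "i < j")
        case True then show ?thesis using gen[of i j] i j by auto
      next
        case False then have "j < i" using \<open>i \<noteq> j\<close> by simp
        then show ?thesis using gen[of j i] i j by (auto simp: insert_commute)
      qed
    qed
  qed
qed


definition conn :: "nat \<Rightarrow> (nat \<Rightarrow> nat \<Rightarrow> bool) \<Rightarrow> bool" where
"conn n P \<longleftrightarrow> (\<forall>S. S \<subseteq> {..<n} \<longrightarrow> 0 \<in> S \<longrightarrow> (\<exists>k<n. k \<notin> S) \<longrightarrow>
    (\<exists>i<n. \<exists>j<n. i<j \<and> P i j \<and> (i\<in>S) \<noteq> (j\<in>S)))"

lemma comp_closed: "(adj_in E W)\<^sup>*\<^sup>* x y \<Longrightarrow> x \<in> W \<Longrightarrow> y \<in> W"
  by (induction rule: rtranclp_induct) (auto simp: adj_in_def)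

lemma comp_sub:
  assumes "\<And>p q. adj_in E W p q \<Longrightarrow> p \<in> A \<Longrightarrow> q \<in> A" "x \<in> A"
  shows "component_in E W x \<subseteq> A"
proof
  fix y assume "y \<in> component_in E W x"
  then have "(adj_in E W)\<^sup>*\<^sup>* x y" unfolding component_in_def by simp
  then show "y \<in> A" by (induction rule: rtranclp_induct) (use assms in blast)+
qed

lemma finite_nbhd: "simple_graph V E \<Longrightarrow> finite (nbhd E v)"
  using nbhd_V unfolding simple_graph_def by (meson finite_subset nbhd_V)

lemma nbhd_card5:
  assumes sg: "simple_graph V E" and rb: "robust V E" and vV: "v \<in> V" and ne: "nbhd E v \<noteq> {}"
  shows "5 \<le> card (nbhd E v)"
proof -
  obtain x where x: "x \<in> nbhd E v" using ne by blast
  have "5 \<le> card (component_in E (nbhd E v) x)" using rb vV x unfolding robust_def by blast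
  moreover have "component_in E (nbhd E v) x \<subseteq> nbhd E v"
    unfolding component_in_def using comp_closed x by fastforce
  ultimately show ?thesis using finite_nbhd[OF sg] by (meson card_mono le_trans)
qed

lemma conn_robust:
  assumes sg: "simple_graph V E" and rb: "robust V E" and vV: "v \<in> V"
    and dL: "distinct L" and sL: "set L = nbhd E v" and len: "length L \<le> 6"
  shows "conn (length L) (\<lambda>i j. {L!i, L!j} \<in> E)"
  unfolding conn_def
proof (intro allI impI)
  fix S assume S: "S \<subseteq> {..<length L}" and S0: "0 \<in> S" and Sk: "\<exists>k<length L. k \<notin> S"
  define n where "n = length L"
  define N where "N = nbhd E v"
  obtain k where k: "k < n" "k \<notin> S" using Sk n_def by blast
  show "\<exists>i<length L. \<exists>j<length L. i < j \<and> {L ! i, L ! j} \<in> E \<and> (i \<in> S) \<noteq> (j \<in> S)"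
  proof (rule ccontr)
    assume nc: "\<not> ?thesis"
    have inj: "L!i = L!j \<longleftrightarrow> i=j" if "i<n" "j<n" for i j using dL that nth_eq_iff_index_eq n_def by blast
    define A where "A = (\<lambda>i. L!i) ` S"
    have memA: "L!i \<in> A \<longleftrightarrow> i \<in> S" if "i<n" for i
    proof
      assume "L!i \<in> A"
      then obtain s where "s \<in> S" "L!i = L!s" unfolding A_def by blast
      moreover have "s < n" using S \<open>s \<in> S\<close> n_def by auto
      ultimately show "i \<in> S" using inj that by auto
    qed (auto simp: A_def)
    have step: "p \<in> A \<longleftrightarrow> q \<in> A" if "adj_in E N p q" for p q
    proof -
      have pq: "p \<in> N" "q \<in> N" "{p,q} \<in> E" using that unfolding adj_in_def by auto
      obtain i where i: "i<n" "L!i = p" using pq(1) sL N_def n_def by (metis in_set_conv_nth)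
      obtain j where j: "j<n" "L!j = q" using pq(2) sL N_def n_def by (metis in_set_conv_nth)
      have "(i \<in> S) = (j \<in> S)"
      proof (cases i j rule: linorder_cases)
        case less then show ?thesis using nc i j pq(3) n_def by auto
      next
        case equal then show ?thesis by simp
      next
        case greater
        have e: "{L!j, L!i} \<in> E" using pq(3) i(2) j(2) by (simp add: insert_commute)
        show ?thesis using nc i(1) j(1) e greater n_def by auto
      qed
      then show ?thesis using memA i j by auto
    qed
    have n0: "0 < n" using k by simp
    have L0: "L!0 \<in> N" using n0 sL N_def n_def by (metis nth_mem)
    have Lk: "L!k \<in> N" using k sL N_def n_def by (metis nth_mem)
    have c1: "component_in E N (L!0) \<subseteq> A"
      by (rule comp_sub) (use step memA n0 S0 in auto)
    have c2: "component_in E N (L!k) \<subseteq> N - A"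
      by (rule comp_sub) (use step memA k Lk in \<open>auto simp: adj_in_def\<close>)
    have finN: "finite N" using finite_nbhd[OF sg] N_def by simp
    have "5 \<le> card (component_in E N (L!0))" using rb vV L0 N_def unfolding robust_def by blast
    moreover have "finite A" unfolding A_def using S by (meson finite_imageI finite_lessThan finite_subset)
    ultimately have a5: "5 \<le> card A" using c1 by (meson card_mono le_trans)
    have "5 \<le> card (component_in E N (L!k))" using rb vV Lk N_def unfolding robust_def by blast
    then have b5: "5 \<le> card (N - A)" using c2 finN by (meson card_mono finite_Diff le_trans)
    have AN: "A \<subseteq> N" unfolding A_def using S sL N_def by (metis image_subset_iff lessThan_iff nth_mem subsetD)
    have "card N = n" using distinct_card[OF dL] sL N_def n_def by simp
    moreover have "card (N - A) = card N - card A" using AN finN by (simp add: card_Diff_subset finite_subset)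
    ultimately show False using a5 b5 len n_def by linarith
  qed
qed

lemma card_gt1: "1 < card B \<Longrightarrow> \<exists>y z. y \<in> B \<and> z \<in> B \<and> y \<noteq> z"
proof (rule ccontr)
  assume a: "1 < card B" "\<not> (\<exists>y z. y \<in> B \<and> z \<in> B \<and> y \<noteq> z)"
  then have "finite B" by (metis card.infinite not_less0)
  then have "card B \<le> Suc 0" using a(2) card_le_Suc0_iff_eq by blast
  then show False using a(1) by simp
qed




lemma conn_cut: assumes "conn n P" "S \<subseteq> {..<n}" "0 \<in> S" "\<exists>k<n. k \<notin> S" shows
    "\<exists>i<n. \<exists>j<n. i<j \<and> P i j \<and> (i\<in>S) \<noteq> (j\<in>S)"
  using assms(1)[unfolded conn_def, rule_format, OF assms(2-4)] .

lemma all_Suc: "(\<forall>i<Suc n. Q i) \<longleftrightarrow> (\<forall>i<n. Q i) \<and> Q n"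
  by (auto simp: less_Suc_eq)
lemma ex_Suc: "(\<exists>i<Suc n. Q i) \<longleftrightarrow> (\<exists>i<n. Q i) \<or> Q n"
  by (auto simp: less_Suc_eq)
lemma six: "(6::nat) = Suc (Suc (Suc (Suc (Suc (Suc 0)))))" by simp
lemma five: "(5::nat) = Suc (Suc (Suc (Suc (Suc 0))))" by simp
lemma all_lt6: "(\<forall>i<(6::nat). Q i) \<longleftrightarrow> Q 0 \<and> Q 1 \<and> Q 2 \<and> Q 3 \<and> Q 4 \<and> Q 5"
  unfolding six all_Suc by (simp add: conj_ac numeral_eq_Suc)
lemma all_lt5: "(\<forall>i<(5::nat). Q i) \<longleftrightarrow> Q 0 \<and> Q 1 \<and> Q 2 \<and> Q 3 \<and> Q 4"
  unfolding five all_Suc by (simp add: conj_ac numeral_eq_Suc)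
lemma ex_lt6: "(\<exists>i<(6::nat). Q i) \<longleftrightarrow> Q 0 \<or> Q 1 \<or> Q 2 \<or> Q 3 \<or> Q 4 \<or> Q 5"
  unfolding six ex_Suc by (simp add: disj_ac numeral_eq_Suc)
lemma ex_lt5: "(\<exists>i<(5::nat). Q i) \<longleftrightarrow> Q 0 \<or> Q 1 \<or> Q 2 \<or> Q 3 \<or> Q 4"
  unfolding five ex_Suc by (simp add: disj_ac numeral_eq_Suc)

lemma coreB5:
  assumes "\<forall>i<5. \<forall>j<5. i<j \<longrightarrow> (P i j \<longleftrightarrow> \<not>((i=0 \<and> j=1) \<or> (i=2 \<and> j=3)))"
  shows "\<exists>Mn Tn Cn. cert 5 P Mn Tn Cn"
proof -
  have "cert 5 P {(1,2),(0,3)} {(0,2,4),(1,3,4)} {}" using assms by (simp add: cert_def all_lt5)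
  then show ?thesis by blast
qed

lemma coreB6:
  assumes "\<forall>i<6. \<forall>j<6. i<j \<longrightarrow> (P i j \<longleftrightarrow> \<not>((i=0 \<and> j=1) \<or> (i=2 \<and> j=3)))"
  shows "\<exists>Mn Tn Cn. cert 6 P Mn Tn Cn"
proof -
  have "cert 6 P {(1,2),(0,3),(4,5)} {(0,2,4),(1,3,4)} {5}" using assms by (simp add: cert_def all_lt6)
  then show ?thesis by blast
qed


lemma coreA5:
  assumes c: "conn 5 P" and n01: "\<not> P 0 1" and n02: "\<not> P 0 2"
  shows "\<exists>Mn Tn Cn. cert 5 P Mn Tn Cn"
proof (cases "P 0 3")
  assume h0: "P 0 3"
  show ?thesis
  proof (cases "P 1 2")
    assume h1: "P 1 2"
    have "cert 5 P {(0,3),(1,2)} {} {3,4}" using n01 n02 h0 h1 by (simp add: cert_def all_lt5)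
    then show ?thesis by blast
  next
    assume h1: "\<not> P 1 2"
    show ?thesis
    proof (cases "P 1 4")
      assume h2: "P 1 4"
      have "cert 5 P {(0,3),(1,4)} {} {3,4}" using n01 n02 h0 h1 h2 by (simp add: cert_def all_lt5)
      then show ?thesis by blast
    next
      assume h2: "\<not> P 1 4"
      show ?thesis
      proof (cases "P 2 4")
        assume h3: "P 2 4"
        have "cert 5 P {(0,3),(2,4)} {} {0,3}" using n01 n02 h0 h1 h2 h3 by (simp add: cert_def all_lt5)
        then show ?thesis by blast
      next
        assume h3: "\<not> P 2 4"
        show ?thesis
        proof (cases "P 0 4")
          assume h4: "P 0 4"
          have "cert 5 P {(0,4)} {} {3}" using n01 n02 h0 h1 h2 h3 h4 by (simp add: cert_def all_lt5)
          then show ?thesis by blast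
        next
          assume h4: "\<not> P 0 4"
          have "cert 5 P {(0,3)} {} {3}" using n01 n02 h0 h1 h2 h3 h4 by (simp add: cert_def all_lt5)
          then show ?thesis by blast
        qed
      qed
    qed
  qed
next
  assume h0: "\<not> P 0 3"
  show ?thesis
  proof (cases "P 0 4")
    assume h1: "P 0 4"
    show ?thesis
    proof (cases "P 1 2")
      assume h2: "P 1 2"
      have "cert 5 P {(0,4),(1,2)} {} {3,4}" using n01 n02 h0 h1 h2 by (simp add: cert_def all_lt5)
      then show ?thesis by blast
    next
      assume h2: "\<not> P 1 2"
      show ?thesis
      proof (cases "P 1 3")
        assume h3: "P 1 3"
        have "cert 5 P {(0,4),(1,3)} {} {2,4}" using n01 n02 h0 h1 h2 h3 by (simp add: cert_def all_lt5)
        then show ?thesis by blast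
      next
        assume h3: "\<not> P 1 3"
        show ?thesis
        proof (cases "P 2 3")
          assume h4: "P 2 3"
          have "cert 5 P {(2,3)} {} {4}" using n01 n02 h0 h1 h2 h3 h4 by (simp add: cert_def all_lt5)
          then show ?thesis by blast
        next
          assume h4: "\<not> P 2 3"
          have "cert 5 P {(0,4)} {} {4}" using n01 n02 h0 h1 h2 h3 h4 by (simp add: cert_def all_lt5)
          then show ?thesis by blast
        qed
      qed
    qed
  next
    assume h1: "\<not> P 0 4"
    show ?thesis using conn_cut[OF c, of "{0}"] n01 n02 h0 h1 by (simp add: ex_lt5)
  qed
qed

lemma coreA6:
  assumes c: "conn 6 P" and n01: "\<not> P 0 1" and n02: "\<not> P 0 2"
  shows "\<exists>Mn Tn Cn. cert 6 P Mn Tn Cn"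
proof (cases "P 1 2")
  assume h0: "P 1 2"
  show ?thesis
  proof (cases "P 0 3")
    assume h1: "P 0 3"
    show ?thesis
    proof (cases "P 2 5")
      assume h2: "P 2 5"
      show ?thesis
      proof (cases "P 4 5")
        assume h3: "P 4 5"
        have "cert 6 P {(0,3),(1,2),(4,5)} {} {3,4,5}" using n01 n02 h0 h1 h2 h3 by (simp add: cert_def all_lt6)
        then show ?thesis by blast
      next
        assume h3: "\<not> P 4 5"
        show ?thesis
        proof (cases "P 0 4")
          assume h4: "P 0 4"
          show ?thesis
          proof (cases "P 0 5")
            assume h5: "P 0 5"
            show ?thesis
            proof (cases "P 3 4")
              assume h6: "P 3 4"
              have "cert 6 P {(0,5),(1,2),(3,4)} {} {3,4,5}" using n01 n02 h0 h1 h2 h3 h4 h5 h6 by (simp add: cert_def all_lt6)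
              then show ?thesis by blast
            next
              assume h6: "\<not> P 3 4"
              show ?thesis
              proof (cases "P 3 5")
                assume h7: "P 3 5"
                have "cert 6 P {(0,4),(1,2),(3,5)} {} {0,1,2}" using n01 n02 h0 h1 h2 h3 h4 h5 h6 h7 by (simp add: cert_def all_lt6)
                then show ?thesis by blast
              next
                assume h7: "\<not> P 3 5"
                show ?thesis
                proof (cases "P 1 3")
                  assume h8: "P 1 3"
                  have "cert 6 P {(0,4),(1,3),(2,5)} {} {0,1,2}" using n01 n02 h0 h1 h2 h3 h4 h5 h6 h7 h8 by (simp add: cert_def all_lt6)
                  then show ?thesis by blast
                next
                  assume h8: "\<not> P 1 3"
                  show ?thesis
                  proof (cases "P 1 4")
                    assume h9: "P 1 4"
                    have "cert 6 P {(0,3),(1,4),(2,5)} {} {0,1,2}" using n01 n02 h0 h1 h2 h3 h4 h5 h6 h7 h8 h9 by (simp add: cert_def all_lt6)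
                    then show ?thesis by blast
                  next
                    assume h9: "\<not> P 1 4"
                    show ?thesis
                    proof (cases "P 1 5")
                      assume h10: "P 1 5"
                      have "cert 6 P {(0,3),(1,5)} {} {0,2}" using n01 n02 h0 h1 h2 h3 h4 h5 h6 h7 h8 h9 h10 by (simp add: cert_def all_lt6)
                      then show ?thesis by blast
                    next
                      assume h10: "\<not> P 1 5"
                      have "cert 6 P {(0,3),(1,2)} {} {0,2}" using n01 n02 h0 h1 h2 h3 h4 h5 h6 h7 h8 h9 h10 by (simp add: cert_def all_lt6)
                      then show ?thesis by blast
                    qed
                  qed
                qed
              qed
            qed
          next
            assume h5: "\<not> P 0 5"
            show ?thesis
            proof (cases "P 1 4")
              assume h6: "P 1 4"
              have "cert 6 P {(0,3),(1,4),(2,5)} {} {1,3,4}" using n01 n02 h0 h1 h2 h3 h4 h5 h6 by (simp add: cert_def all_lt6)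
              then show ?thesis by blast
            next
              assume h6: "\<not> P 1 4"
              show ?thesis
              proof (cases "P 1 5")
                assume h7: "P 1 5"
                have "cert 6 P {(0,4),(1,5)} {} {2,3}" using n01 n02 h0 h1 h2 h3 h4 h5 h6 h7 by (simp add: cert_def all_lt6)
                then show ?thesis by blast
              next
                assume h7: "\<not> P 1 5"
                have "cert 6 P {(0,4),(1,2)} {} {2,3}" using n01 n02 h0 h1 h2 h3 h4 h5 h6 h7 by (simp add: cert_def all_lt6)
                then show ?thesis by blast
              qed
            qed
          qed
        next
          assume h4: "\<not> P 0 4"
          show ?thesis
          proof (cases "P 1 4")
            assume h5: "P 1 4"
            have "cert 6 P {(0,3),(1,4),(2,5)} {} {2,3,5}" using n01 n02 h0 h1 h2 h3 h4 h5 by (simp add: cert_def all_lt6)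
            then show ?thesis by blast
          next
            assume h5: "\<not> P 1 4"
            show ?thesis
            proof (cases "P 1 5")
              assume h6: "P 1 5"
              show ?thesis
              proof (cases "P 2 4")
                assume h7: "P 2 4"
                have "cert 6 P {(0,3),(1,5),(2,4)} {} {0,2,3}" using n01 n02 h0 h1 h2 h3 h4 h5 h6 h7 by (simp add: cert_def all_lt6)
                then show ?thesis by blast
              next
                assume h7: "\<not> P 2 4"
                have "cert 6 P {(0,3),(1,2)} {} {3,5}" using n01 n02 h0 h1 h2 h3 h4 h5 h6 h7 by (simp add: cert_def all_lt6)
                then show ?thesis by blast
              qed
            next
              assume h6: "\<not> P 1 5"
              show ?thesis
              proof (cases "P 0 5")
                assume h7: "P 0 5"
                have "cert 6 P {(0,5),(1,2)} {} {2,3}" using n01 n02 h0 h1 h2 h3 h4 h5 h6 h7 by (simp add: cert_def all_lt6)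
                then show ?thesis by blast
              next
                assume h7: "\<not> P 0 5"
                have "cert 6 P {(0,3),(1,2)} {} {2,3}" using n01 n02 h0 h1 h2 h3 h4 h5 h6 h7 by (simp add: cert_def all_lt6)
                then show ?thesis by blast
              qed
            qed
          qed
        qed
      qed
    next
      assume h2: "\<not> P 2 5"
      show ?thesis
      proof (cases "P 1 5")
        assume h3: "P 1 5"
        show ?thesis
        proof (cases "P 4 5")
          assume h4: "P 4 5"
          have "cert 6 P {(0,3),(1,2),(4,5)} {} {3,4,5}" using n01 n02 h0 h1 h2 h3 h4 by (simp add: cert_def all_lt6)
          then show ?thesis by blast
        next
          assume h4: "\<not> P 4 5"
          show ?thesis
          proof (cases "P 0 4")
            assume h5: "P 0 4"
            show ?thesis
            proof (cases "P 2 4")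
              assume h6: "P 2 4"
              have "cert 6 P {(0,3),(1,5),(2,4)} {} {0,1,3}" using n01 n02 h0 h1 h2 h3 h4 h5 h6 by (simp add: cert_def all_lt6)
              then show ?thesis by blast
            next
              assume h6: "\<not> P 2 4"
              show ?thesis
              proof (cases "P 2 3")
                assume h7: "P 2 3"
                have "cert 6 P {(0,4),(1,5),(2,3)} {} {0,1,3}" using n01 n02 h0 h1 h2 h3 h4 h5 h6 h7 by (simp add: cert_def all_lt6)
                then show ?thesis by blast
              next
                assume h7: "\<not> P 2 3"
                show ?thesis
                proof (cases "P 3 5")
                  assume h8: "P 3 5"
                  have "cert 6 P {(0,4),(1,2),(3,5)} {} {0,1,3}" using n01 n02 h0 h1 h2 h3 h4 h5 h6 h7 h8 by (simp add: cert_def all_lt6)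
                  then show ?thesis by blast
                next
                  assume h8: "\<not> P 3 5"
                  show ?thesis
                  proof (cases "P 3 4")
                    assume h9: "P 3 4"
                    have "cert 6 P {(1,2),(3,4)} {} {0,1}" using n01 n02 h0 h1 h2 h3 h4 h5 h6 h7 h8 h9 by (simp add: cert_def all_lt6)
                    then show ?thesis by blast
                  next
                    assume h9: "\<not> P 3 4"
                    have "cert 6 P {(0,3),(1,2)} {} {0,1}" using n01 n02 h0 h1 h2 h3 h4 h5 h6 h7 h8 h9 by (simp add: cert_def all_lt6)
                    then show ?thesis by blast
                  qed
                qed
              qed
            qed
          next
            assume h5: "\<not> P 0 4"
            show ?thesis
            proof (cases "P 2 4")
              assume h6: "P 2 4"
              have "cert 6 P {(0,3),(1,5),(2,4)} {} {0,1,3}" using n01 n02 h0 h1 h2 h3 h4 h5 h6 by (simp add: cert_def all_lt6)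
              then show ?thesis by blast
            next
              assume h6: "\<not> P 2 4"
              show ?thesis
              proof (cases "P 0 5")
                assume h7: "P 0 5"
                have "cert 6 P {(0,5),(1,2)} {} {1,3}" using n01 n02 h0 h1 h2 h3 h4 h5 h6 h7 by (simp add: cert_def all_lt6)
                then show ?thesis by blast
              next
                assume h7: "\<not> P 0 5"
                have "cert 6 P {(0,3),(1,2)} {} {1,3}" using n01 n02 h0 h1 h2 h3 h4 h5 h6 h7 by (simp add: cert_def all_lt6)
                then show ?thesis by blast
              qed
            qed
          qed
        qed
      next
        assume h3: "\<not> P 1 5"
        show ?thesis
        proof (cases "P 0 5")
          assume h4: "P 0 5"
          have "cert 6 P {(0,5),(1,2)} {} {3,4}" using n01 n02 h0 h1 h2 h3 h4 by (simp add: cert_def all_lt6)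
          then show ?thesis by blast
        next
          assume h4: "\<not> P 0 5"
          have "cert 6 P {(0,3),(1,2)} {} {3,4}" using n01 n02 h0 h1 h2 h3 h4 by (simp add: cert_def all_lt6)
          then show ?thesis by blast
        qed
      qed
    qed
  next
    assume h1: "\<not> P 0 3"
    show ?thesis
    proof (cases "P 0 4")
      assume h2: "P 0 4"
      show ?thesis
      proof (cases "P 3 5")
        assume h3: "P 3 5"
        have "cert 6 P {(0,4),(1,2),(3,5)} {} {3,4,5}" using n01 n02 h0 h1 h2 h3 by (simp add: cert_def all_lt6)
        then show ?thesis by blast
      next
        assume h3: "\<not> P 3 5"
        show ?thesis
        proof (cases "P 1 3")
          assume h4: "P 1 3"
          show ?thesis
          proof (cases "P 2 5")
            assume h5: "P 2 5"
            have "cert 6 P {(0,4),(1,3),(2,5)} {} {2,4,5}" using n01 n02 h0 h1 h2 h3 h4 h5 by (simp add: cert_def all_lt6)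
            then show ?thesis by blast
          next
            assume h5: "\<not> P 2 5"
            show ?thesis
            proof (cases "P 0 5")
              assume h6: "P 0 5"
              show ?thesis
              proof (cases "P 2 3")
                assume h7: "P 2 3"
                have "cert 6 P {(0,5),(2,3)} {} {1,4}" using n01 n02 h0 h1 h2 h3 h4 h5 h6 h7 by (simp add: cert_def all_lt6)
                then show ?thesis by blast
              next
                assume h7: "\<not> P 2 3"
                have "cert 6 P {(0,5),(1,2)} {} {1,4}" using n01 n02 h0 h1 h2 h3 h4 h5 h6 h7 by (simp add: cert_def all_lt6)
                then show ?thesis by blast
              qed
            next
              assume h6: "\<not> P 0 5"
              show ?thesis
              proof (cases "P 2 3")
                assume h7: "P 2 3"
                have "cert 6 P {(0,4),(2,3)} {} {1,4}" using n01 n02 h0 h1 h2 h3 h4 h5 h6 h7 by (simp add: cert_def all_lt6)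
                then show ?thesis by blast
              next
                assume h7: "\<not> P 2 3"
                have "cert 6 P {(0,4),(1,2)} {} {1,4}" using n01 n02 h0 h1 h2 h3 h4 h5 h6 h7 by (simp add: cert_def all_lt6)
                then show ?thesis by blast
              qed
            qed
          qed
        next
          assume h4: "\<not> P 1 3"
          show ?thesis
          proof (cases "P 1 5")
            assume h5: "P 1 5"
            show ?thesis
            proof (cases "P 2 3")
              assume h6: "P 2 3"
              have "cert 6 P {(0,4),(1,5),(2,3)} {} {0,2,4}" using n01 n02 h0 h1 h2 h3 h4 h5 h6 by (simp add: cert_def all_lt6)
              then show ?thesis by blast
            next
              assume h6: "\<not> P 2 3"
              have "cert 6 P {(0,4),(1,2)} {} {4,5}" using n01 n02 h0 h1 h2 h3 h4 h5 h6 by (simp add: cert_def all_lt6)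
              then show ?thesis by blast
            qed
          next
            assume h5: "\<not> P 1 5"
            show ?thesis
            proof (cases "P 0 5")
              assume h6: "P 0 5"
              have "cert 6 P {(0,5),(1,2)} {} {2,4}" using n01 n02 h0 h1 h2 h3 h4 h5 h6 by (simp add: cert_def all_lt6)
              then show ?thesis by blast
            next
              assume h6: "\<not> P 0 5"
              have "cert 6 P {(0,4),(1,2)} {} {2,4}" using n01 n02 h0 h1 h2 h3 h4 h5 h6 by (simp add: cert_def all_lt6)
              then show ?thesis by blast
            qed
          qed
        qed
      qed
    next
      assume h2: "\<not> P 0 4"
      show ?thesis
      proof (cases "P 0 5")
        assume h3: "P 0 5"
        show ?thesis
        proof (cases "P 3 4")
          assume h4: "P 3 4"
          have "cert 6 P {(0,5),(1,2),(3,4)} {} {1,2,5}" using n01 n02 h0 h1 h2 h3 h4 by (simp add: cert_def all_lt6)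
          then show ?thesis by blast
        next
          assume h4: "\<not> P 3 4"
          show ?thesis
          proof (cases "P 1 3")
            assume h5: "P 1 3"
            show ?thesis
            proof (cases "P 2 4")
              assume h6: "P 2 4"
              have "cert 6 P {(0,5),(1,3),(2,4)} {} {1,2,5}" using n01 n02 h0 h1 h2 h3 h4 h5 h6 by (simp add: cert_def all_lt6)
              then show ?thesis by blast
            next
              assume h6: "\<not> P 2 4"
              show ?thesis
              proof (cases "P 2 3")
                assume h7: "P 2 3"
                have "cert 6 P {(0,5),(2,3)} {} {1,5}" using n01 n02 h0 h1 h2 h3 h4 h5 h6 h7 by (simp add: cert_def all_lt6)
                then show ?thesis by blast
              next
                assume h7: "\<not> P 2 3"
                have "cert 6 P {(0,5),(1,2)} {} {1,5}" using n01 n02 h0 h1 h2 h3 h4 h5 h6 h7 by (simp add: cert_def all_lt6)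
                then show ?thesis by blast
              qed
            qed
          next
            assume h5: "\<not> P 1 3"
            show ?thesis
            proof (cases "P 1 4")
              assume h6: "P 1 4"
              have "cert 6 P {(0,5),(1,4)} {} {2,5}" using n01 n02 h0 h1 h2 h3 h4 h5 h6 by (simp add: cert_def all_lt6)
              then show ?thesis by blast
            next
              assume h6: "\<not> P 1 4"
              have "cert 6 P {(0,5),(1,2)} {} {2,5}" using n01 n02 h0 h1 h2 h3 h4 h5 h6 by (simp add: cert_def all_lt6)
              then show ?thesis by blast
            qed
          qed
        qed
      next
        assume h3: "\<not> P 0 5"
        show ?thesis using conn_cut[OF c, of "{0}"] n01 n02 h0 h1 h2 h3 by (simp add: ex_lt6)
      qed
    qed
  qed
next
  assume h0: "\<not> P 1 2"
  show ?thesis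
  proof (cases "P 0 4")
    assume h1: "P 0 4"
    show ?thesis
    proof (cases "P 1 5")
      assume h2: "P 1 5"
      show ?thesis
      proof (cases "P 2 3")
        assume h3: "P 2 3"
        have "cert 6 P {(0,4),(1,5),(2,3)} {} {3,4,5}" using n01 n02 h0 h1 h2 h3 by (simp add: cert_def all_lt6)
        then show ?thesis by blast
      next
        assume h3: "\<not> P 2 3"
        show ?thesis
        proof (cases "P 0 3")
          assume h4: "P 0 3"
          show ?thesis
          proof (cases "P 1 3")
            assume h5: "P 1 3"
            show ?thesis
            proof (cases "P 2 4")
              assume h6: "P 2 4"
              have "cert 6 P {(0,3),(1,5),(2,4)} {} {1,4,5}" using n01 n02 h0 h1 h2 h3 h4 h5 h6 by (simp add: cert_def all_lt6)
              then show ?thesis by blast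
            next
              assume h6: "\<not> P 2 4"
              show ?thesis
              proof (cases "P 2 5")
                assume h7: "P 2 5"
                have "cert 6 P {(0,4),(1,3),(2,5)} {} {0,4,5}" using n01 n02 h0 h1 h2 h3 h4 h5 h6 h7 by (simp add: cert_def all_lt6)
                then show ?thesis by blast
              next
                assume h7: "\<not> P 2 5"
                show ?thesis using conn_cut[OF c, of "{0,1,3,4,5}"] n01 n02 h0 h1 h2 h3 h4 h5 h6 h7 by (simp add: ex_lt6)
              qed
            qed
          next
            assume h5: "\<not> P 1 3"
            have "cert 6 P {(0,3),(1,5)} {} {4,5}" using n01 n02 h0 h1 h2 h3 h4 h5 by (simp add: cert_def all_lt6)
            then show ?thesis by blast
          qed
        next
          assume h4: "\<not> P 0 3"
          show ?thesis
          proof (cases "P 1 3")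
            assume h5: "P 1 3"
            have "cert 6 P {(0,4),(1,3)} {} {4,5}" using n01 n02 h0 h1 h2 h3 h4 h5 by (simp add: cert_def all_lt6)
            then show ?thesis by blast
          next
            assume h5: "\<not> P 1 3"
            have "cert 6 P {(0,4),(1,5)} {} {4,5}" using n01 n02 h0 h1 h2 h3 h4 h5 by (simp add: cert_def all_lt6)
            then show ?thesis by blast
          qed
        qed
      qed
    next
      assume h2: "\<not> P 1 5"
      show ?thesis
      proof (cases "P 0 5")
        assume h3: "P 0 5"
        show ?thesis
        proof (cases "P 1 3")
          assume h4: "P 1 3"
          show ?thesis
          proof (cases "P 2 5")
            assume h5: "P 2 5"
            have "cert 6 P {(0,4),(1,3),(2,5)} {} {0,3,4}" using n01 n02 h0 h1 h2 h3 h4 h5 by (simp add: cert_def all_lt6)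
            then show ?thesis by blast
          next
            assume h5: "\<not> P 2 5"
            have "cert 6 P {(0,5),(1,3)} {} {3,4}" using n01 n02 h0 h1 h2 h3 h4 h5 by (simp add: cert_def all_lt6)
            then show ?thesis by blast
          qed
        next
          assume h4: "\<not> P 1 3"
          show ?thesis
          proof (cases "P 1 4")
            assume h5: "P 1 4"
            show ?thesis
            proof (cases "P 2 3")
              assume h6: "P 2 3"
              have "cert 6 P {(0,5),(1,4),(2,3)} {} {0,4,5}" using n01 n02 h0 h1 h2 h3 h4 h5 h6 by (simp add: cert_def all_lt6)
              then show ?thesis by blast
            next
              assume h6: "\<not> P 2 3"
              show ?thesis
              proof (cases "P 0 3")
                assume h7: "P 0 3"
                have "cert 6 P {(0,3),(1,4)} {} {4,5}" using n01 n02 h0 h1 h2 h3 h4 h5 h6 h7 by (simp add: cert_def all_lt6)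
                then show ?thesis by blast
              next
                assume h7: "\<not> P 0 3"
                have "cert 6 P {(0,5),(1,4)} {} {4,5}" using n01 n02 h0 h1 h2 h3 h4 h5 h6 h7 by (simp add: cert_def all_lt6)
                then show ?thesis by blast
              qed
            qed
          next
            assume h5: "\<not> P 1 4"
            show ?thesis using conn_cut[OF c, of "{0,2,3,4,5}"] n01 n02 h0 h1 h2 h3 h4 h5 by (simp add: ex_lt6)
          qed
        qed
      next
        assume h3: "\<not> P 0 5"
        show ?thesis
        proof (cases "P 2 5")
          assume h4: "P 2 5"
          have "cert 6 P {(0,4),(2,5)} {} {3,4}" using n01 n02 h0 h1 h2 h3 h4 by (simp add: cert_def all_lt6)
          then show ?thesis by blast
        next
          assume h4: "\<not> P 2 5"
          show ?thesis
          proof (cases "P 2 3")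
            assume h5: "P 2 3"
            have "cert 6 P {(0,4),(2,3)} {} {3,4}" using n01 n02 h0 h1 h2 h3 h4 h5 by (simp add: cert_def all_lt6)
            then show ?thesis by blast
          next
            assume h5: "\<not> P 2 3"
            show ?thesis
            proof (cases "P 1 3")
              assume h6: "P 1 3"
              have "cert 6 P {(0,4),(1,3)} {} {3,4}" using n01 n02 h0 h1 h2 h3 h4 h5 h6 by (simp add: cert_def all_lt6)
              then show ?thesis by blast
            next
              assume h6: "\<not> P 1 3"
              show ?thesis
              proof (cases "P 3 5")
                assume h7: "P 3 5"
                have "cert 6 P {(0,4),(3,5)} {} {0,4}" using n01 n02 h0 h1 h2 h3 h4 h5 h6 h7 by (simp add: cert_def all_lt6)
                then show ?thesis by blast
              next
                assume h7: "\<not> P 3 5"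
                show ?thesis
                proof (cases "P 0 3")
                  assume h8: "P 0 3"
                  have "cert 6 P {(0,3)} {} {4}" using n01 n02 h0 h1 h2 h3 h4 h5 h6 h7 h8 by (simp add: cert_def all_lt6)
                  then show ?thesis by blast
                next
                  assume h8: "\<not> P 0 3"
                  have "cert 6 P {(0,4)} {} {4}" using n01 n02 h0 h1 h2 h3 h4 h5 h6 h7 h8 by (simp add: cert_def all_lt6)
                  then show ?thesis by blast
                qed
              qed
            qed
          qed
        qed
      qed
    qed
  next
    assume h1: "\<not> P 0 4"
    show ?thesis
    proof (cases "P 0 3")
      assume h2: "P 0 3"
      show ?thesis
      proof (cases "P 1 4")
        assume h3: "P 1 4"
        show ?thesis
        proof (cases "P 1 5")
          assume h4: "P 1 5"
          show ?thesis
          proof (cases "P 2 4")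
            assume h5: "P 2 4"
            have "cert 6 P {(0,3),(1,5),(2,4)} {} {1,3,5}" using n01 n02 h0 h1 h2 h3 h4 h5 by (simp add: cert_def all_lt6)
            then show ?thesis by blast
          next
            assume h5: "\<not> P 2 4"
            have "cert 6 P {(0,3),(1,4)} {} {3,5}" using n01 n02 h0 h1 h2 h3 h4 h5 by (simp add: cert_def all_lt6)
            then show ?thesis by blast
          qed
        next
          assume h4: "\<not> P 1 5"
          show ?thesis
          proof (cases "P 2 5")
            assume h5: "P 2 5"
            have "cert 6 P {(0,3),(1,4),(2,5)} {} {0,3,4}" using n01 n02 h0 h1 h2 h3 h4 h5 by (simp add: cert_def all_lt6)
            then show ?thesis by blast
          next
            assume h5: "\<not> P 2 5"
            show ?thesis
            proof (cases "P 0 5")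
              assume h6: "P 0 5"
              have "cert 6 P {(0,5),(1,4)} {} {3,4}" using n01 n02 h0 h1 h2 h3 h4 h5 h6 by (simp add: cert_def all_lt6)
              then show ?thesis by blast
            next
              assume h6: "\<not> P 0 5"
              have "cert 6 P {(0,3),(1,4)} {} {3,4}" using n01 n02 h0 h1 h2 h3 h4 h5 h6 by (simp add: cert_def all_lt6)
              then show ?thesis by blast
            qed
          qed
        qed
      next
        assume h3: "\<not> P 1 4"
        show ?thesis
        proof (cases "P 2 4")
          assume h4: "P 2 4"
          have "cert 6 P {(0,3),(2,4)} {} {3,5}" using n01 n02 h0 h1 h2 h3 h4 by (simp add: cert_def all_lt6)
          then show ?thesis by blast
        next
          assume h4: "\<not> P 2 4"
          show ?thesis
          proof (cases "P 2 5")
            assume h5: "P 2 5"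
            have "cert 6 P {(0,3),(2,5)} {} {3,5}" using n01 n02 h0 h1 h2 h3 h4 h5 by (simp add: cert_def all_lt6)
            then show ?thesis by blast
          next
            assume h5: "\<not> P 2 5"
            show ?thesis
            proof (cases "P 1 5")
              assume h6: "P 1 5"
              have "cert 6 P {(0,3),(1,5)} {} {3,5}" using n01 n02 h0 h1 h2 h3 h4 h5 h6 by (simp add: cert_def all_lt6)
              then show ?thesis by blast
            next
              assume h6: "\<not> P 1 5"
              show ?thesis
              proof (cases "P 4 5")
                assume h7: "P 4 5"
                have "cert 6 P {(0,3),(4,5)} {} {0,3}" using n01 n02 h0 h1 h2 h3 h4 h5 h6 h7 by (simp add: cert_def all_lt6)
                then show ?thesis by blast
              next
                assume h7: "\<not> P 4 5"
                show ?thesis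
                proof (cases "P 0 5")
                  assume h8: "P 0 5"
                  have "cert 6 P {(0,5)} {} {3}" using n01 n02 h0 h1 h2 h3 h4 h5 h6 h7 h8 by (simp add: cert_def all_lt6)
                  then show ?thesis by blast
                next
                  assume h8: "\<not> P 0 5"
                  have "cert 6 P {(0,3)} {} {3}" using n01 n02 h0 h1 h2 h3 h4 h5 h6 h7 h8 by (simp add: cert_def all_lt6)
                  then show ?thesis by blast
                qed
              qed
            qed
          qed
        qed
      qed
    next
      assume h2: "\<not> P 0 3"
      show ?thesis
      proof (cases "P 0 5")
        assume h3: "P 0 5"
        show ?thesis
        proof (cases "P 1 3")
          assume h4: "P 1 3"
          show ?thesis
          proof (cases "P 2 4")
            assume h5: "P 2 4"
            have "cert 6 P {(0,5),(1,3),(2,4)} {} {1,3,5}" using n01 n02 h0 h1 h2 h3 h4 h5 by (simp add: cert_def all_lt6)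
            then show ?thesis by blast
          next
            assume h5: "\<not> P 2 4"
            show ?thesis
            proof (cases "P 1 4")
              assume h6: "P 1 4"
              have "cert 6 P {(0,5),(1,4)} {} {3,5}" using n01 n02 h0 h1 h2 h3 h4 h5 h6 by (simp add: cert_def all_lt6)
              then show ?thesis by blast
            next
              assume h6: "\<not> P 1 4"
              have "cert 6 P {(0,5),(1,3)} {} {3,5}" using n01 n02 h0 h1 h2 h3 h4 h5 h6 by (simp add: cert_def all_lt6)
              then show ?thesis by blast
            qed
          qed
        next
          assume h4: "\<not> P 1 3"
          show ?thesis
          proof (cases "P 2 3")
            assume h5: "P 2 3"
            have "cert 6 P {(0,5),(2,3)} {} {4,5}" using n01 n02 h0 h1 h2 h3 h4 h5 by (simp add: cert_def all_lt6)
            then show ?thesis by blast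
          next
            assume h5: "\<not> P 2 3"
            show ?thesis
            proof (cases "P 1 4")
              assume h6: "P 1 4"
              have "cert 6 P {(0,5),(1,4)} {} {4,5}" using n01 n02 h0 h1 h2 h3 h4 h5 h6 by (simp add: cert_def all_lt6)
              then show ?thesis by blast
            next
              assume h6: "\<not> P 1 4"
              show ?thesis
              proof (cases "P 2 4")
                assume h7: "P 2 4"
                have "cert 6 P {(0,5),(2,4)} {} {3,5}" using n01 n02 h0 h1 h2 h3 h4 h5 h6 h7 by (simp add: cert_def all_lt6)
                then show ?thesis by blast
              next
                assume h7: "\<not> P 2 4"
                show ?thesis
                proof (cases "P 3 4")
                  assume h8: "P 3 4"
                  have "cert 6 P {(3,4)} {} {5}" using n01 n02 h0 h1 h2 h3 h4 h5 h6 h7 h8 by (simp add: cert_def all_lt6)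
                  then show ?thesis by blast
                next
                  assume h8: "\<not> P 3 4"
                  have "cert 6 P {(0,5)} {} {5}" using n01 n02 h0 h1 h2 h3 h4 h5 h6 h7 h8 by (simp add: cert_def all_lt6)
                  then show ?thesis by blast
                qed
              qed
            qed
          qed
        qed
      next
        assume h3: "\<not> P 0 5"
        show ?thesis using conn_cut[OF c, of "{0}"] n01 n02 h0 h1 h2 h3 by (simp add: ex_lt6)
      qed
    qed
  qed
qed

lemma keyA:
  assumes sg: "simple_graph V E" and rb: "robust V E" and vV: "v \<in> V" and deg: "degree E v \<le> 6"
    and x: "x \<in> nbhd E v" and y: "y \<in> nbhd E v" and z: "z \<in> nbhd E v"
    and d: "x \<noteq> y" "x \<noteq> z" "y \<noteq> z" and nxy: "{x,y} \<notin> E" and nxz: "{x,z} \<notin> E"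
  shows "reducible V E {v}"
proof -
  define N where "N = nbhd E v"
  have finN: "finite N" using finite_nbhd[OF sg] N_def by simp
  obtain rest where r: "distinct rest" "set rest = N - {x,y,z}"
    using finite_distinct_list[of "N - {x,y,z}"] finN by blast
  define L where "L = x#y#z#rest"
  have dL: "distinct L" using r d unfolding L_def by auto
  have sL: "set L = nbhd E v" using r x y z N_def unfolding L_def by auto
  have len: "length L = card N" using distinct_card[OF dL] sL N_def by simp
  have c6: "card N \<le> 6" using deg N_def unfolding degree_def by simp
  have c5: "5 \<le> card N" using nbhd_card5[OF sg rb vV] x N_def by blast
  have cn: "conn (length L) (\<lambda>i j. {L!i, L!j} \<in> E)"
    using conn_robust[OF sg rb vV dL sL] len c6 by simp
  have p01: "\<not> {L!0, L!1} \<in> E" using nxy unfolding L_def by simp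
  have p02: "\<not> {L!0, L!2} \<in> E" using nxz unfolding L_def by simp
  have "length L = 5 \<or> length L = 6" using len c5 c6 by linarith
  then obtain Mn Tn Cn where "cert (length L) (\<lambda>i j. {L!i, L!j} \<in> E) Mn Tn Cn"
  proof
    assume "length L = 5"
    then show ?thesis using coreA5[of "\<lambda>i j. {L!i, L!j} \<in> E"] cn p01 p02 that by auto
  next
    assume "length L = 6"
    then show ?thesis using coreA6[of "\<lambda>i j. {L!i, L!j} \<in> E"] cn p01 p02 that by auto
  qed
  then show ?thesis using cert_transfer[OF sg vV dL sL] by blast
qed

lemma keyB:
  assumes sg: "simple_graph V E" and rb: "robust V E" and vV: "v \<in> V" and deg: "degree E v \<le> 6"
    and a: "a \<in> nbhd E v" and b: "b \<in> nbhd E v" and c: "c \<in> nbhd E v" and d: "d \<in> nbhd E v"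
    and dd: "distinct [a,b,c,d]" and nab: "{a,b} \<notin> E" and ncd: "{c,d} \<notin> E"
    and H: "\<forall>p q. p \<in> nbhd E v \<longrightarrow> q \<in> nbhd E v \<longrightarrow> p \<noteq> q \<longrightarrow> {p,q} \<notin> E \<longrightarrow> {p,q} = {a,b} \<or> {p,q} = {c,d}"
  shows "reducible V E {v}"
proof -
  define N where "N = nbhd E v"
  have finN: "finite N" using finite_nbhd[OF sg] N_def by simp
  obtain rest where r: "distinct rest" "set rest = N - {a,b,c,d}"
    using finite_distinct_list[of "N - {a,b,c,d}"] finN by blast
  define L where "L = a#b#c#d#rest"
  have dL: "distinct L" using r dd unfolding L_def by auto
  have sL: "set L = nbhd E v" using r a b c d N_def unfolding L_def by auto
  have len: "length L = card N" using distinct_card[OF dL] sL N_def by simp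
  have c6: "card N \<le> 6" using deg N_def unfolding degree_def by simp
  have c5: "5 \<le> card N" using nbhd_card5[OF sg rb vV] a N_def by blast
  define n where "n = length L"
  have inj: "L!i = L!j \<longleftrightarrow> i=j" if "i<n" "j<n" for i j using dL that nth_eq_iff_index_eq n_def by blast
  have inN: "L!i \<in> nbhd E v" if "i<n" for i using that sL n_def by (metis nth_mem)
  have L0: "L!0 = a" "L!1 = b" "L!2 = c" "L!3 = d" unfolding L_def by simp_all
  have n4: "3 < n" using len c5 n_def by simp
  have hyp: "\<forall>i<n. \<forall>j<n. i<j \<longrightarrow> ({L!i, L!j} \<in> E \<longleftrightarrow> \<not>((i=0 \<and> j=1) \<or> (i=2 \<and> j=3)))"
  proof (intro allI impI)
    fix i j assume ij: "i < n" "j < n" "i < j"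
    show "{L!i, L!j} \<in> E \<longleftrightarrow> \<not>((i=0 \<and> j=1) \<or> (i=2 \<and> j=3))"
    proof (cases "(i=0 \<and> j=1) \<or> (i=2 \<and> j=3)")
      case True then show ?thesis using nab ncd L0 by auto
    next
      case False
      show ?thesis
      proof (rule ccontr)
        assume "\<not> ?thesis"
        then have ne: "{L!i, L!j} \<notin> E" using False by simp
        have "L!i \<noteq> L!j" using inj ij by simp
        then have "{L!i, L!j} = {L!0, L!1} \<or> {L!i, L!j} = {L!2, L!3}"
          using H inN ij ne L0 by simp
        then have "(L!i = L!0 \<and> L!j = L!1) \<or> (L!i = L!1 \<and> L!j = L!0) \<or>
                   (L!i = L!2 \<and> L!j = L!3) \<or> (L!i = L!3 \<and> L!j = L!2)"
          by (auto simp: doubleton_eq_iff)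
        then have "(i = 0 \<and> j = 1) \<or> (i = 1 \<and> j = 0) \<or> (i = 2 \<and> j = 3) \<or> (i = 3 \<and> j = 2)"
          using inj ij n4 by auto
        then show False using False ij by auto
      qed
    qed
  qed
  have "n = 5 \<or> n = 6" using len c5 c6 n_def by linarith
  then obtain Mn Tn Cn where "cert n (\<lambda>i j. {L!i, L!j} \<in> E) Mn Tn Cn"
  proof
    assume "n = 5"
    then show ?thesis using coreB5[of "\<lambda>i j. {L!i, L!j} \<in> E"] hyp that by auto
  next
    assume "n = 6"
    then show ?thesis using coreB6[of "\<lambda>i j. {L!i, L!j} \<in> E"] hyp that by auto
  qed
  then show ?thesis using cert_transfer[OF sg vV dL sL] n_def by blast
qed

lemma compl_mem:
  assumes "e \<in> compl_edges E W"
  shows "\<exists>p q. e = {p,q} \<and> p \<in> W \<and> q \<in> W \<and> p \<noteq> q \<and> {p,q} \<notin> E"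
  using assms unfolding compl_edges_def by blast

theorem proposition5p1:
  fixes V :: "'a set" and E :: "'a set set" and v :: 'a
  assumes "simple_graph V E" and "robust V E" and "v \<in> V" and "degree E v \<le> 6"
  shows "(max_degree (nbhd E v) (compl_edges E (nbhd E v)) > 1 \<longrightarrow> reducible V E {v})
       \<and> (card (compl_edges E (nbhd E v)) = 2 \<longrightarrow> reducible V E {v})"
proof
  note sg = assms(1) and rb = assms(2) and vV = assms(3) and deg = assms(4)
  define N where "N = nbhd E v"
  define F where "F = compl_edges E N"
  have finN: "finite N" using finite_nbhd[OF sg] N_def by simp
  have KA: "reducible V E {v}" if "x \<in> N" "y \<in> N" "z \<in> N" "x \<noteq> y" "x \<noteq> z" "y \<noteq> z"
    "{x,y} \<notin> E" "{x,z} \<notin> E" for x y z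
    using keyA[OF sg rb vV deg, of x y z] that N_def by blast
  show "max_degree (nbhd E v) (compl_edges E (nbhd E v)) > 1 \<longrightarrow> reducible V E {v}"
  proof
    assume "max_degree (nbhd E v) (compl_edges E (nbhd E v)) > 1"
    then have md: "max_degree N F > 1" unfolding N_def F_def .
    then have Nne: "N \<noteq> {}" unfolding max_degree_def by (auto split: if_splits)
    then have "Max ((\<lambda>x. card (nbhd F x \<inter> N)) ` N) > 1" using md unfolding max_degree_def by simp
    moreover have "Max ((\<lambda>x. card (nbhd F x \<inter> N)) ` N) \<in> (\<lambda>x. card (nbhd F x \<inter> N)) ` N"
      using Nne finN by (intro Max_in) auto
    ultimately obtain x where x: "x \<in> N" "card (nbhd F x \<inter> N) > 1" by auto
    then obtain y z where yz: "y \<in> nbhd F x \<inter> N" "z \<in> nbhd F x \<inter> N" "y \<noteq> z" using card_gt1 by blast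
    have nb: "{x,w} \<notin> E \<and> x \<noteq> w" if "w \<in> nbhd F x" for w
    proof -
      have "{x,w} \<in> F" using that unfolding nbhd_def by simp
      then obtain p q where pq: "{x,w} = {p,q}" "p \<noteq> q" "{p,q} \<notin> E" using compl_mem unfolding F_def by blast
      then show ?thesis by (metis doubleton_eq_iff)
    qed
    show "reducible V E {v}" using KA[of x y z] x yz nb by blast
  qed
  show "card (compl_edges E (nbhd E v)) = 2 \<longrightarrow> reducible V E {v}"
  proof
    assume "card (compl_edges E (nbhd E v)) = 2"
    then have "card F = 2" unfolding F_def N_def .
    then obtain e1 e2 where F: "F = {e1,e2}" "e1 \<noteq> e2" by (meson card_2_iff)
    obtain a b where ab: "e1 = {a,b}" "a \<in> N" "b \<in> N" "a \<noteq> b" "{a,b} \<notin> E"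
      using compl_mem[of e1 E N] F unfolding F_def by auto
    obtain c d where cd: "e2 = {c,d}" "c \<in> N" "d \<in> N" "c \<noteq> d" "{c,d} \<notin> E"
      using compl_mem[of e2 E N] F unfolding F_def by auto
    show "reducible V E {v}"
    proof (cases "a = c \<or> a = d \<or> b = c \<or> b = d")
      case True
      then show ?thesis
      proof (elim disjE)
        assume "a = c"
        then show ?thesis using KA[of a b d] ab cd F(2) by (auto simp: insert_commute)
      next
        assume "a = d"
        then show ?thesis using KA[of a b c] ab cd F(2) by (auto simp: insert_commute)
      next
        assume "b = c"
        then show ?thesis using KA[of b a d] ab cd F(2) by (auto simp: insert_commute)
      next
        assume "b = d"
        then show ?thesis using KA[of b a c] ab cd F(2) by (auto simp: insert_commute)
      qed
    next
      case False
      have H: "\<forall>p q. p \<in> nbhd E v \<longrightarrow> q \<in> nbhd E v \<longrightarrow> p \<noteq> q \<longrightarrow> {p,q} \<notin> E \<longrightarrow> {p,q} = {a,b} \<or> {p,q} = {c,d}"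
      proof (intro allI impI)
        fix p q assume "p \<in> nbhd E v" "q \<in> nbhd E v" "p \<noteq> q" "{p,q} \<notin> E"
        then have "{p,q} \<in> F" unfolding F_def N_def compl_edges_def by blast
        then show "{p,q} = {a,b} \<or> {p,q} = {c,d}" using F ab cd by auto
      qed
      show ?thesis
        by (rule keyB[OF sg rb vV deg, of a b c d]) (use ab cd False H N_def in auto)
    qed
  qed
qed


end
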